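(* Let $n\ge1$, let $f$ be a rational function in $z_1,\dots,z_n$, and let $T\subseteq\mathbb C^n$ be a connected multicircular domain on which $f$ is holomorphic and such that the highest power of $z_n$ occurring in the Laurent series expansion of $f$ on $T$ equals minus the order of the pole $z_n=\infty$ of $f$. Let $S$ be a nonempty open subset of $T$ and $S'$ its image under $(z_1,\dots,z_n)\mapsto(z_1,\dots,z_{n-1})$. Let $a_{k_1\dots k_n}\in\mathbb C$ be such that for each fixed $k_n\in\mathbb Z$ the series $\sum_{k_1,\dots,k_{n-1}\in\mathbb Z}a_{k_1\dots k_n}z_1^{k_1}\cdots z_{n-1}^{k_{n-1}}$ converges absolutely for every $(z_1,\dots,z_{n-1})\in S'$, and the series $\sum_{k_n\in\mathbb Z}\big(\sum_{k_1,\dots,k_{n-1}}a_{k_1\dots k_n}z_1^{k_1}\cdots z_{n-1}^{k_{n-1}}\big)z_n^{k_n}$, regarded as a series whose terms are the bracketed sums times $z_n^{k_n}$, is upper-truncated in $z_n$ and converges to $f(z_1,\dots,z_n)$ for every point of $S$. Then the Laurent series $\sum_{k_1,\dots,k_n\in\mathbb Z}a_{k_1\dots k_n}z_1^{k_1}\cdots z_n^{k_n}$ converges absolutely to $f(z_1,\dots,z_n)$ for every $(z_1,\dots,z_n)\in T$.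
   Context: A multicircular domain (centered at the origin) is an open subset $T\subseteq\mathbb C^n$ such that $(z_1,\dots,z_n)\in T$ implies $(z_1e^{i\theta_1},\dots,z_ne^{i\theta_n})\in T$ for all $\theta_1,\dots,\theta_n\in\mathbb R$. A holomorphic function on a connected multicircular domain has a unique Laurent series expansion centered at $0$ converging absolutely to it on the domain. *)

theory Defs
  imports "HOL-Analysis.Analysis"
begin

text \<open>Points of C^n are modelled as functions nat => complex vanishing at all indices >= n;
  coordinate z_j of the paper is z (j-1). Open subsets of C^n are open subsets of this subspace
  (product topology, which restricts to the Euclidean topology on C^n).\<close>

definition cspace :: "nat \<Rightarrow> (nat \<Rightarrow> complex) set" where
  "cspace n = {z. \<forall>i\<ge>n. z i = 0}"

definition open_in_C :: "nat \<Rightarrow> (nat \<Rightarrow> complex) set \<Rightarrow> bool" where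
  "open_in_C n U \<longleftrightarrow> openin (top_of_set (cspace n)) U"

definition multicircular_domain :: "nat \<Rightarrow> (nat \<Rightarrow> complex) set \<Rightarrow> bool" where
  "multicircular_domain n T \<longleftrightarrow> open_in_C n T \<and>
     (\<forall>z\<in>T. \<forall>\<theta>::nat \<Rightarrow> real. (\<lambda>i. z i * cis (\<theta> i)) \<in> T)"

text \<open>Holomorphic in several variables: continuous and holomorphic in each variable separately
  (equivalent to the usual notion by Osgood's lemma).\<close>
definition holo_on_C :: "nat \<Rightarrow> ((nat \<Rightarrow> complex) \<Rightarrow> complex) \<Rightarrow> (nat \<Rightarrow> complex) set \<Rightarrow> bool" where
  "holo_on_C n f T \<longleftrightarrow> T \<subseteq> cspace n \<and> continuous_on T f \<and>
     (\<forall>z\<in>T. \<forall>i<n. \<exists>e>0. (\<forall>w. cmod (w - z i) < e \<longrightarrow> z(i := w) \<in> T) \<and>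
        (\<lambda>w. f (z(i := w))) field_differentiable at (z i))"

definition is_mpoly :: "nat \<Rightarrow> ((nat \<Rightarrow> nat) \<Rightarrow> complex) \<Rightarrow> bool" where
  "is_mpoly n c \<longleftrightarrow> finite {\<alpha>. c \<alpha> \<noteq> 0} \<and> (\<forall>\<alpha>. c \<alpha> \<noteq> 0 \<longrightarrow> (\<forall>i\<ge>n. \<alpha> i = 0))"

definition mpoly_eval :: "nat \<Rightarrow> ((nat \<Rightarrow> nat) \<Rightarrow> complex) \<Rightarrow> (nat \<Rightarrow> complex) \<Rightarrow> complex" where
  "mpoly_eval n c z = (\<Sum>\<alpha>\<in>{\<alpha>. c \<alpha> \<noteq> 0}. c \<alpha> * (\<Prod>i<n. z i ^ \<alpha> i))"

definition deg_last :: "nat \<Rightarrow> ((nat \<Rightarrow> nat) \<Rightarrow> complex) \<Rightarrow> nat" where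
  "deg_last n c = Max ((\<lambda>\<alpha>. \<alpha> (n - 1)) ` {\<alpha>. c \<alpha> \<noteq> 0})"

definition lexps :: "nat \<Rightarrow> (nat \<Rightarrow> int) set" where
  "lexps n = {k. \<forall>i\<ge>n. k i = 0}"

definition lmono :: "nat \<Rightarrow> (nat \<Rightarrow> complex) \<Rightarrow> (nat \<Rightarrow> int) \<Rightarrow> complex" where
  "lmono n z k = (\<Prod>i<n. z i powi k i)"

definition laurent_abs_conv_to ::
  "nat \<Rightarrow> ((nat \<Rightarrow> int) \<Rightarrow> complex) \<Rightarrow> (nat \<Rightarrow> complex) \<Rightarrow> complex \<Rightarrow> bool" where
  "laurent_abs_conv_to n a z v \<longleftrightarrow>
     (\<lambda>k. norm (a k * lmono n z k)) summable_on lexps n \<and>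
     ((\<lambda>k. a k * lmono n z k) has_sum v) (lexps n)"

definition laurent_abs_conv ::
  "nat \<Rightarrow> ((nat \<Rightarrow> int) \<Rightarrow> complex) \<Rightarrow> (nat \<Rightarrow> complex) \<Rightarrow> bool" where
  "laurent_abs_conv n a z \<longleftrightarrow> (\<lambda>k. norm (a k * lmono n z k)) summable_on lexps n"

definition laurent_expansion_on ::
  "nat \<Rightarrow> ((nat \<Rightarrow> int) \<Rightarrow> complex) \<Rightarrow> ((nat \<Rightarrow> complex) \<Rightarrow> complex) \<Rightarrow> (nat \<Rightarrow> complex) set \<Rightarrow> bool" where
  "laurent_expansion_on n b f T \<longleftrightarrow> (\<forall>z\<in>T. laurent_abs_conv_to n b z (f z))"

definition proj_last :: "nat \<Rightarrow> (nat \<Rightarrow> complex) \<Rightarrow> (nat \<Rightarrow> complex)" where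
  "proj_last n z = z(n - 1 := 0)"

definition inner_sum :: "nat \<Rightarrow> ((nat \<Rightarrow> int) \<Rightarrow> complex) \<Rightarrow> int \<Rightarrow> (nat \<Rightarrow> complex) \<Rightarrow> complex" where
  "inner_sum n a m w = (\<Sum>\<^sub>\<infinity>k'\<in>lexps (n - 1). a (k'(n - 1 := m)) * lmono (n - 1) w k')"

end

theory Submission
  imports Defs "HOL-Complex_Analysis.Complex_Analysis"
begin

lemma has_sum_diff':
  fixes f g :: "'a \<Rightarrow> 'b::topological_ab_group_add"
  assumes "(f has_sum a) A" "(g has_sum b) A"
  shows "((\<lambda>x. f x - g x) has_sum (a - b)) A"
proof -
  have "((\<lambda>x. - g x) has_sum (- b)) A" using assms(2) by (simp add: has_sum_uminus)
  from has_sum_add[OF assms(1) this] show ?thesis by simp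
qed

lemma ereal_lt_le: "a < b \<Longrightarrow> ereal b \<le> c \<Longrightarrow> ereal a < c"
proof -
  assume "a < b" "ereal b \<le> c"
  moreover have "ereal a < ereal b" using \<open>a < b\<close> by simp
  ultimately show ?thesis using less_le_trans by blast
qed

lemma laurent_split:
  fixes e :: "int \<Rightarrow> complex" and t :: complex
  assumes t: "t \<noteq> 0"
    and s1: "summable (\<lambda>j. norm (e (int j) * t^j))"
    and s2: "summable (\<lambda>j. norm ((if j=0 then 0 else e (- int j)) * (inverse t)^j))"
  shows "((\<lambda>k. e k * t powi k) has_sum
     (eval_fps (Abs_fps (\<lambda>j. e (int j))) t + eval_fps (Abs_fps (\<lambda>j. if j=0 then 0 else e (-int j))) (inverse t))) UNIV"
proof -
  define f where "f = (\<lambda>k. e k * t powi k)"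
  have h1: "((\<lambda>j. e (int j) * t^j) has_sum eval_fps (Abs_fps (\<lambda>j. e (int j))) t) UNIV"
    unfolding eval_fps_def using s1
    by (intro norm_summable_imp_has_sum) (auto intro!: summable_sums summable_norm_cancel)
  have "(f has_sum eval_fps (Abs_fps (\<lambda>j. e (int j))) t) (int ` UNIV)"
    using h1 by (subst has_sum_reindex) (auto simp: f_def o_def)
  moreover have "int ` UNIV = {k. k \<ge> 0}"
    by (auto simp: image_iff) (metis nonneg_int_cases)
  ultimately have P: "(f has_sum eval_fps (Abs_fps (\<lambda>j. e (int j))) t) {k. k \<ge> 0}" by simp
  have h2: "((\<lambda>j. (if j=0 then 0 else e (- int j)) * (inverse t)^j) has_sum
       eval_fps (Abs_fps (\<lambda>j. if j=0 then 0 else e (-int j))) (inverse t)) UNIV"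
    unfolding eval_fps_def using s2
    by (intro norm_summable_imp_has_sum) (auto intro!: summable_sums summable_norm_cancel)
  have h3: "((\<lambda>j. (if j=0 then 0 else e (- int j)) * (inverse t)^j) has_sum
       eval_fps (Abs_fps (\<lambda>j. if j=0 then 0 else e (-int j))) (inverse t)) {j. j > 0}"
    using h2 by (subst has_sum_cong_neutral[where T=UNIV]) auto
  have Q: "(f has_sum eval_fps (Abs_fps (\<lambda>j. if j=0 then 0 else e (-int j))) (inverse t)) {k. k < 0}"
  proof -
    have "(f has_sum eval_fps (Abs_fps (\<lambda>j. if j=0 then 0 else e (-int j))) (inverse t)) {k. k < 0}
       = ((\<lambda>j. (if j=0 then 0 else e (- int j)) * (inverse t)^j) has_sum
       eval_fps (Abs_fps (\<lambda>j. if j=0 then 0 else e (-int j))) (inverse t)) {j. j > 0}"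
      by (rule has_sum_reindex_bij_witness[where i="\<lambda>j. - int j" and j="\<lambda>k. nat (-k)"])
         (auto simp: f_def power_int_def power_inverse)
    with h3 show ?thesis by simp
  qed
  have "(f has_sum (eval_fps (Abs_fps (\<lambda>j. e (int j))) t + eval_fps (Abs_fps (\<lambda>j. if j=0 then 0 else e (-int j))) (inverse t))) ({k. k \<ge> 0} \<union> {k. k < 0})"
    by (rule has_sum_Un_disjoint[OF P Q]) auto
  moreover have "{k::int. k \<ge> 0} \<union> {k. k < 0} = UNIV" by auto
  ultimately show ?thesis by (simp add: f_def)
qed

lemma core1d:
  fixes e :: "int \<Rightarrow> complex" and U :: "complex set"
  assumes U: "open U" "U \<noteq> {}" "0 \<notin> U"
    and sm: "\<And>t. t\<in>U \<Longrightarrow> (\<lambda>k. norm (e k * t powi k)) summable_on UNIV"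
    and hs: "\<And>t. t\<in>U \<Longrightarrow> ((\<lambda>k. e k * t powi k) has_sum 0) UNIV"
  shows "e k = 0"
proof -
  obtain t0 where t0: "t0 \<in> U" using U by auto
  have t0nz: "t0 \<noteq> 0" using t0 U by auto
  obtain \<delta> where \<delta>: "\<delta> > 0" "ball t0 \<delta> \<subseteq> U" using U(1) t0 open_contains_ball by blast
  define r0 where "r0 = norm t0"
  have r0: "r0 > 0" using t0nz by (simp add: r0_def)
  define \<epsilon> where "\<epsilon> = min (\<delta>/2) (r0/2)"
  have \<epsilon>: "\<epsilon> > 0" "\<epsilon> < r0" "\<epsilon> < \<delta>" using r0 \<delta> by (auto simp: \<epsilon>_def)
  define \<rho> where "\<rho> = r0 - \<epsilon>"
  define R where "R = r0 + \<epsilon>"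
  have \<rho>R: "0 < \<rho>" "\<rho> < R" "0 < R" using \<epsilon> by (auto simp: \<rho>_def R_def)
  have modpt: "(\<lambda>k. norm (e k) * r powi k) summable_on UNIV" if "r = \<rho> \<or> r = R" for r
  proof -
    define t where "t = of_real (r/r0) * t0"
    have "norm t = \<bar>r/r0\<bar> * r0" unfolding t_def norm_mult r0_def norm_of_real by (rule refl)
    then have nt: "norm t = r" using that \<rho>R r0 by auto
    have "dist t0 t = \<bar>1 - r/r0\<bar> * r0"
    proof -
      have "t0 - t = of_real (1 - r/r0) * t0" by (simp add: t_def algebra_simps)
      then have "dist t0 t = norm (of_real (1 - r/r0) * t0)" by (simp only: dist_norm)
      then show ?thesis by (simp only: norm_mult norm_of_real r0_def real_norm_def)
    qed
    also have "\<dots> = \<bar>r0 - r\<bar>" using r0 by (simp add: abs_mult_pos' field_simps flip: abs_mult_pos)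
    also have "\<dots> \<le> \<epsilon>" using that \<epsilon> by (auto simp: \<rho>_def R_def)
    finally have "t \<in> U" using \<delta> \<epsilon> by auto
    from sm[OF this] show ?thesis by (simp add: norm_mult norm_power_int nt)
  qed
  define p where "p = Abs_fps (\<lambda>j. e (int j))"
  define q where "q = Abs_fps (\<lambda>j. if j=0 then 0 else e (-int j))"
  have sR: "summable (\<lambda>j. norm (e (int j)) * R ^ j)"
  proof -
    have "(\<lambda>k. norm (e k) * R powi k) summable_on int ` UNIV"
      using modpt[of R] by (rule summable_on_subset) auto
    then have "((\<lambda>k. norm (e k) * R powi k) \<circ> int) summable_on UNIV"
      by (subst (asm) summable_on_reindex) auto
    then show ?thesis
      using \<rho>R by (subst (asm) summable_on_UNIV_nonneg_real_iff) (auto simp: o_def)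
  qed
  have s\<rho>: "summable (\<lambda>j. norm (if j=0 then 0 else e (-int j)) * (inverse \<rho>) ^ j)"
  proof -
    have "(\<lambda>k. norm (e k) * \<rho> powi k) summable_on (\<lambda>j. - int j) ` UNIV"
      using modpt[of \<rho>] by (rule summable_on_subset) auto
    then have "((\<lambda>k. norm (e k) * \<rho> powi k) \<circ> (\<lambda>j. - int j)) summable_on UNIV"
      by (subst (asm) summable_on_reindex) (auto simp: inj_on_def)
    then have "summable (\<lambda>j. norm (e (- int j)) * \<rho> powi (- int j))"
      using \<rho>R by (subst (asm) summable_on_UNIV_nonneg_real_iff) (auto simp: o_def)
    then show ?thesis
      by (rule summable_comparison_test'[where N=0])
         (use \<rho>R in \<open>auto simp: power_int_minus power_inverse\<close>)
  qed
  have radp: "fps_conv_radius p \<ge> R"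
  proof -
    have eq: "norm (fps_nth p j * of_real R ^ j) = norm (e (int j)) * R ^ j" for j
      using \<rho>R(3) unfolding p_def fps_nth_Abs_fps norm_mult norm_power norm_of_real by simp
    have "summable (\<lambda>j. fps_nth p j * of_real R ^ j)"
      by (rule summable_norm_cancel) (unfold eq, rule sR)
    from conv_radius_geI[OF this] \<rho>R show ?thesis by (simp add: fps_conv_radius_def)
  qed
  have radq: "fps_conv_radius q \<ge> inverse \<rho>"
  proof -
    have eq: "norm (fps_nth q j * of_real (inverse \<rho>) ^ j) = norm (if j=0 then 0 else e (-int j)) * (inverse \<rho>) ^ j" for j
      using \<rho>R(1) unfolding q_def fps_nth_Abs_fps norm_mult norm_power norm_of_real by simp
    have su: "summable (\<lambda>j. fps_nth q j * of_real (inverse \<rho>) ^ j)"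
      by (rule summable_norm_cancel) (unfold eq, rule s\<rho>)
    have e2: "cmod (of_real (inverse \<rho>)::complex) = inverse \<rho>" unfolding norm_of_real using \<rho>R by simp
    have "conv_radius (fps_nth q) \<ge> ereal (inverse \<rho>)" using conv_radius_geI[OF su] unfolding e2 .
    then show ?thesis unfolding fps_conv_radius_def .
  qed
  define A where "A = {t::complex. \<rho> < norm (t - 0) \<and> norm (t - 0) < R}"
  define H where "H = (\<lambda>t. eval_fps p t + eval_fps q (inverse t))"
  have Hsum: "((\<lambda>k. e k * t powi k) has_sum H t) UNIV" if "t \<in> A" for t
  proof -
    have t: "t \<noteq> 0" "\<rho> < norm t" "norm t < R" using that \<rho>R by (auto simp: A_def)
    show ?thesis unfolding H_def p_def q_def
    proof (rule laurent_split[OF t(1)])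
      show "summable (\<lambda>j. norm (e (int j) * t ^ j))"
        by (rule summable_comparison_test'[OF sR, where N=0])
           (use t in \<open>auto simp: norm_mult norm_power intro!: mult_left_mono power_mono\<close>)
      have "norm (inverse t) \<le> inverse \<rho>" using t \<rho>R
        by (simp add: norm_inverse le_imp_inverse_le)
      then show "summable (\<lambda>j. norm ((if j = 0 then 0 else e (- int j)) * inverse t ^ j))"
        by (intro summable_comparison_test'[OF s\<rho>, where N=0])
           (auto simp: norm_mult norm_power intro!: mult_left_mono power_mono)
    qed
  qed
  have openA: "open A" unfolding A_def by (intro open_Collect_conj) (auto intro!: open_Collect_less continuous_intros)
  have connA: "connected A" unfolding A_def by (rule connected_annulus) simp
  have holH: "H holomorphic_on A"
  proof -
    have "eval_fps p holomorphic_on A"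
      by (rule holomorphic_on_eval_fps) (use radp in \<open>auto simp: A_def intro: ereal_lt_le\<close>)
    moreover have "(eval_fps q \<circ> inverse) holomorphic_on A"
    proof (rule holomorphic_on_compose_gen)
      show "inverse holomorphic_on A" using \<rho>R by (auto simp: A_def intro!: holomorphic_intros)
      show "eval_fps q holomorphic_on eball 0 (fps_conv_radius q)" by (rule holomorphic_on_eval_fps) auto
      show "inverse ` A \<subseteq> eball 0 (fps_conv_radius q)"
      proof
        fix u assume "u \<in> inverse ` A"
        then obtain t where "t \<in> A" "u = inverse t" by auto
        then have "norm u < inverse \<rho>" using \<rho>R by (auto simp: A_def norm_inverse intro!: less_imp_inverse_less)
        then show "u \<in> eball 0 (fps_conv_radius q)" using radq by (auto intro: ereal_lt_le)
      qed
    qed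
    ultimately show ?thesis unfolding H_def by (auto simp: o_def intro!: holomorphic_intros)
  qed
  have ballA: "ball t0 \<epsilon> \<subseteq> A"
  proof
    fix t assume "t \<in> ball t0 \<epsilon>"
    then have "norm (t0 - t) < \<epsilon>" by (simp add: dist_norm)
    moreover have "\<bar>norm t - norm t0\<bar> \<le> norm (t0 - t)" by (metis abs_minus_commute norm_minus_commute norm_triangle_ineq3)
    ultimately show "t \<in> A" by (auto simp: A_def \<rho>_def R_def r0_def)
  qed
  have H0: "H t = 0" if "t \<in> A" for t
  proof (rule analytic_continuation_open[where g="\<lambda>_. 0", OF open_ball openA _ connA ballA holH _ _ that])
    show "ball t0 \<epsilon> \<noteq> {}" using \<epsilon> by simp
    show "(\<lambda>_. 0) holomorphic_on A" by simp
    fix z assume z: "z \<in> ball t0 \<epsilon>"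
    then have "z \<in> U" using \<delta> \<epsilon> by auto
    have "z \<in> A" using z ballA by auto
    from has_sum_unique[OF Hsum[OF this] hs[OF \<open>z \<in> U\<close>]] show "H z = 0" .
  qed
  define E where "E = (\<lambda>t. if norm t < R then eval_fps p t else - eval_fps q (inverse t))"
  have holE: "E holomorphic_on (ball 0 R \<union> {t::complex. \<rho> < norm t})"
  proof (rule holomorphic_on_Un)
    have "eval_fps p holomorphic_on ball 0 R"
      by (rule holomorphic_on_eval_fps) (use radp in \<open>auto intro: ereal_lt_le\<close>)
    then show "E holomorphic_on ball 0 R" by (rule holomorphic_transform) (auto simp: E_def)
    have "(\<lambda>t. - eval_fps q (inverse t)) holomorphic_on {t::complex. \<rho> < norm t}"
    proof -
      have "(eval_fps q \<circ> inverse) holomorphic_on {t::complex. \<rho> < norm t}"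
      proof (rule holomorphic_on_compose_gen)
        show "inverse holomorphic_on {t::complex. \<rho> < norm t}" using \<rho>R by (auto intro!: holomorphic_intros)
        show "eval_fps q holomorphic_on eball 0 (fps_conv_radius q)" by (rule holomorphic_on_eval_fps) auto
        show "inverse ` {t::complex. \<rho> < norm t} \<subseteq> eball 0 (fps_conv_radius q)"
        proof
          fix u assume "u \<in> inverse ` {t::complex. \<rho> < norm t}"
          then obtain t where "\<rho> < norm t" "u = inverse t" by auto
          then have "norm u < inverse \<rho>" using \<rho>R by (auto simp: norm_inverse intro!: less_imp_inverse_less)
          then show "u \<in> eball 0 (fps_conv_radius q)" using radq by (auto intro: ereal_lt_le)
        qed
      qed
      then show ?thesis by (auto simp: o_def intro!: holomorphic_intros)
    qed
    then show "E holomorphic_on {t::complex. \<rho> < norm t}"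
    proof (rule holomorphic_transform)
      fix t assume t: "t \<in> {t::complex. \<rho> < norm t}"
      show "- eval_fps q (inverse t) = E t"
      proof (cases "norm t < R")
        case True
        then have "t \<in> A" using t by (auto simp: A_def)
        from H0[OF this] True show ?thesis by (auto simp: E_def H_def add_eq_0_iff)
      qed (auto simp: E_def)
    qed
    show "open (ball 0 R)" by simp
    show "open {t::complex. \<rho> < norm t}" by (auto intro!: open_Collect_less continuous_intros)
  qed
  have "ball 0 R \<union> {t::complex. \<rho> < norm t} = UNIV" using \<rho>R by auto
  with holE have holE': "E holomorphic_on UNIV" by simp
  have contq: "isCont (eval_fps q) 0"
    using ereal_lt_le[of 0 "inverse \<rho>" "fps_conv_radius q"] radq \<rho>R by (intro continuous_eval_fps) (simp add: zero_ereal_def)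
  have limE: "(E \<longlongrightarrow> 0) at_infinity"
  proof -
    have "((\<lambda>t. - eval_fps q (inverse t)) \<longlongrightarrow> - eval_fps q 0) at_infinity"
      by (intro tendsto_minus isCont_tendsto_compose[OF contq] tendsto_inverse_0)
    moreover have "eval_fps q 0 = 0" by (simp add: eval_fps_at_0 q_def)
    moreover have "eventually (\<lambda>t. - eval_fps q (inverse t) = E t) at_infinity"
      unfolding eventually_at_infinity by (rule exI[of _ R]) (auto simp: E_def)
    ultimately show ?thesis by (auto intro: Lim_transform_eventually)
  qed
  have E0: "E t = 0" for t by (rule Liouville_weak_0[OF holE' limE])
  have p0: "p = 0"
  proof (rule eval_fps_eqD)
    show "fps_conv_radius p > 0" using ereal_lt_le[of 0 R "fps_conv_radius p"] radp \<rho>R by (simp add: zero_ereal_def)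
    show "fps_conv_radius (0::complex fps) > 0" by simp
    have "eventually (\<lambda>t. t \<in> ball 0 R) (nhds (0::complex))" using \<rho>R by (intro eventually_nhds_in_open) auto
    then show "eventually (\<lambda>t. eval_fps p t = eval_fps 0 t) (nhds 0)"
    proof (rule eventually_mono)
      fix t :: complex assume "t \<in> ball 0 R"
      with E0[of t] show "eval_fps p t = eval_fps 0 t" by (auto simp: E_def)
    qed
  qed
  have q0: "q = 0"
  proof (rule eval_fps_eqD)
    show "fps_conv_radius q > 0" using ereal_lt_le[of 0 "inverse \<rho>" "fps_conv_radius q"] radq \<rho>R by (simp add: zero_ereal_def)
    show "fps_conv_radius (0::complex fps) > 0" by simp
    have "eventually (\<lambda>u. u \<in> ball 0 (inverse R)) (nhds (0::complex))" using \<rho>R by (intro eventually_nhds_in_open) auto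
    then show "eventually (\<lambda>u. eval_fps q u = eval_fps 0 u) (nhds 0)"
    proof (rule eventually_mono)
      fix u :: complex assume u: "u \<in> ball 0 (inverse R)"
      show "eval_fps q u = eval_fps 0 u"
      proof (cases "u = 0")
        case True then show ?thesis by (simp add: eval_fps_at_0 q_def)
      next
        case False
        have "norm u < inverse R" using u by simp
        then have "inverse (inverse R) < inverse (norm u)"
          by (rule less_imp_inverse_less) (use False in simp)
        then have "R < norm (inverse u)" by (simp add: norm_inverse)
        with E0[of "inverse u"] False show ?thesis by (auto simp: E_def)
      qed
    qed
  qed
  show "e k = 0"
  proof (cases "k \<ge> 0")
    case True
    have "fps_nth p (nat k) = 0" using p0 by simp
    with True show ?thesis by (simp add: p_def)
  next
    case False
    have "fps_nth q (nat (-k)) = 0" using q0 by simp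
    with False show ?thesis by (simp add: q_def)
  qed
qed

lemma lmono_upd: "lmono (Suc d) w (k'(d:=l)) = lmono d (w(d:=0)) k' * w d powi l"
proof -
  have "lmono (Suc d) w (k'(d:=l)) = (\<Prod>i<d. w i powi (k'(d:=l)) i) * w d powi l"
    unfolding lmono_def by (simp add: prod.lessThan_Suc)
  also have "(\<Prod>i<d. w i powi (k'(d:=l)) i) = lmono d (w(d:=0)) k'"
    unfolding lmono_def by (rule prod.cong) auto
  finally show ?thesis .
qed

lemma lexps_upd: "k' \<in> lexps d \<Longrightarrow> k'(d:=l) \<in> lexps (Suc d)"
  by (auto simp: lexps_def)

lemma lexps_del: "k \<in> lexps (Suc d) \<Longrightarrow> k(d:=0) \<in> lexps d"
  by (auto simp: lexps_def)

lemma split_sum: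
  fixes c :: "(nat \<Rightarrow> int) \<Rightarrow> complex" and w :: "nat \<Rightarrow> complex"
  assumes nz: "w d \<noteq> 0"
    and sm: "(\<lambda>k. norm (c k * lmono (Suc d) w k)) summable_on lexps (Suc d)"
    and hs: "((\<lambda>k. c k * lmono (Suc d) w k) has_sum v) (lexps (Suc d))"
  shows "\<And>l. (\<lambda>k'. norm (c (k'(d:=l)) * lmono d (w(d:=0)) k')) summable_on lexps d"
    and "(\<lambda>l. norm (infsum (\<lambda>k'. c (k'(d:=l)) * lmono d (w(d:=0)) k') (lexps d) * w d powi l)) summable_on UNIV"
    and "((\<lambda>l. infsum (\<lambda>k'. c (k'(d:=l)) * lmono d (w(d:=0)) k') (lexps d) * w d powi l) has_sum v) UNIV"
proof -
  define \<rho> where "\<rho> = w(d:=0)"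
  define t where "t = w d"
  define F where "F = (\<lambda>(l,k'). c (k'(d:=l)) * lmono d \<rho> k' * t powi l)"
  have Fe: "F (l,k') = c (k'(d:=l)) * lmono (Suc d) w (k'(d:=l))" for l k'
    by (simp add: F_def lmono_upd \<rho>_def t_def mult.assoc)
  have w1: "\<And>a. a \<in> lexps (Suc d) \<Longrightarrow> (\<lambda>(l,k'). k'(d:=l)) ((\<lambda>k. (k d, k(d:=0))) a) = a" by auto
  have w2: "\<And>a. a \<in> lexps (Suc d) \<Longrightarrow> (\<lambda>k. (k d, k(d:=0))) a \<in> UNIV \<times> lexps d" by (auto intro: lexps_del)
  have w3: "\<And>b. b \<in> UNIV \<times> lexps d \<Longrightarrow> (\<lambda>k. (k d, k(d:=0))) ((\<lambda>(l,k'). k'(d:=l)) b) = b"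
    by (auto simp: lexps_def)
  have w4: "\<And>b. b \<in> UNIV \<times> lexps d \<Longrightarrow> (\<lambda>(l,k'). k'(d:=l)) b \<in> lexps (Suc d)" by (auto intro: lexps_upd)
  have FS: "(F has_sum v) (UNIV \<times> lexps d)"
    using hs by (subst (asm) has_sum_reindex_bij_witness[OF w1 w2 w3 w4, where h=F]) (auto simp: Fe)
  have nFS: "(\<lambda>(l,k'). norm (F (l,k'))) summable_on (UNIV \<times> lexps d)"
    using sm by (subst (asm) summable_on_reindex_bij_witness[OF w1 w2 w3 w4, where h="\<lambda>(l,k'). norm (F (l,k'))"]) (auto simp: Fe)
  have tnz: "norm (t powi l) \<noteq> 0" for l using nz by (simp add: t_def)
  have in1: "(\<lambda>k'. norm (F (l,k'))) summable_on lexps d" for l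
    using summable_on_SigmaD1[where f="\<lambda>l k'. norm (F (l,k'))", OF nFS] by simp
  have i1: "(\<lambda>k'. norm (c (k'(d:=l)) * lmono d \<rho> k')) summable_on lexps d" for l
  proof -
    have "(\<lambda>k'. norm (c (k'(d:=l)) * lmono d \<rho> k') * norm (t powi l)) summable_on lexps d"
      using in1[of l] by (simp add: F_def norm_mult mult.assoc)
    then show ?thesis using summable_on_cmult_left'[OF tnz] by blast
  qed
  then show "\<And>l. (\<lambda>k'. norm (c (k'(d:=l)) * lmono d (w(d:=0)) k')) summable_on lexps d" by (simp add: \<rho>_def)
  define E where "E = (\<lambda>l. infsum (\<lambda>k'. c (k'(d:=l)) * lmono d \<rho> k') (lexps d))"
  have Ehs: "((\<lambda>k'. c (k'(d:=l)) * lmono d \<rho> k') has_sum E l) (lexps d)" for l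
    unfolding E_def using abs_summable_summable[OF i1[of l]] by (simp add: summable_iff_has_sum_infsum)
  have inhs: "((\<lambda>k'. F (l,k')) has_sum E l * t powi l) (lexps d)" for l
    using has_sum_cmult_left[OF Ehs[of l], of "t powi l"] by (simp add: F_def)
  have "((\<lambda>l. E l * t powi l) has_sum v) UNIV"
    by (rule has_sum_SigmaD[OF FS]) (use inhs in auto)
  then show "((\<lambda>l. infsum (\<lambda>k'. c (k'(d:=l)) * lmono d (w(d:=0)) k') (lexps d) * w d powi l) has_sum v) UNIV"
    by (simp add: E_def \<rho>_def t_def)
  have sD: "(\<lambda>l. infsum (\<lambda>k'. norm (F (l,k'))) (lexps d)) summable_on UNIV"
    using summable_on_SigmaD[OF nFS] in1 by auto
  have "(\<lambda>l. norm (E l * t powi l)) summable_on UNIV"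
  proof (rule summable_on_comparison_test[OF sD])
    fix l :: int
    have "norm (E l) \<le> infsum (\<lambda>k'. norm (c (k'(d:=l)) * lmono d \<rho> k')) (lexps d)"
      unfolding E_def by (rule norm_infsum_bound) (rule i1)
    then have "norm (E l) * norm (t powi l) \<le> infsum (\<lambda>k'. norm (c (k'(d:=l)) * lmono d \<rho> k')) (lexps d) * norm (t powi l)"
      by (rule mult_right_mono) simp
    also have "\<dots> = infsum (\<lambda>k'. norm (F (l,k'))) (lexps d)"
      using i1[of l] by (subst infsum_cmult_left[symmetric]) (auto simp: F_def norm_mult mult.assoc)
    finally show "norm (E l * t powi l) \<le> infsum (\<lambda>k'. norm (F (l,k'))) (lexps d)" by (simp add: norm_mult)
  qed simp
  then show "(\<lambda>l. norm (infsum (\<lambda>k'. c (k'(d:=l)) * lmono d (w(d:=0)) k') (lexps d) * w d powi l)) summable_on UNIV"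
    by (simp add: E_def \<rho>_def t_def)
qed

lemma open_nonzero_point:
  fixes U :: "complex set"
  assumes "open U" "x \<in> U" shows "\<exists>t\<in>U. t \<noteq> 0"
proof (rule ccontr)
  assume "\<not> ?thesis"
  then have "U = {0}" using assms(2) by auto
  with assms(1) show False using not_open_singleton by metis
qed

lemma cont_upd: "continuous_on S (\<lambda>x. (g x)(d := h x))"
  if "continuous_on S g" "continuous_on S h" for g :: "'a::topological_space \<Rightarrow> nat \<Rightarrow> complex"
proof (rule continuous_on_coordinatewise_then_product)
  fix i
  show "continuous_on S (\<lambda>x. ((g x)(d := h x)) i)"
    using that continuous_on_product_then_coordinatewise[OF that(1), of i]
    by (cases "i = d") auto
qed

lemma slice_open:
  assumes V: "openin (top_of_set (cspace (Suc d))) V" and \<rho>: "\<rho> \<in> cspace (Suc d)"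
  shows "open {t. \<rho>(d:=t) \<in> V}"
proof -
  have c: "continuous_on UNIV (\<lambda>t::complex. \<rho>(d:=t))"
    by (rule cont_upd) (auto intro: continuous_intros)
  have "(\<lambda>t::complex. \<rho>(d:=t)) \<in> UNIV \<rightarrow> cspace (Suc d)" using \<rho> by (auto simp: cspace_def)
  from continuous_openin_preimage[OF c this V]
  show ?thesis by (simp add: vimage_def)
qed

lemma proj_open:
  assumes V: "openin (top_of_set (cspace (Suc d))) V"
  shows "openin (top_of_set (cspace d)) {\<rho>\<in>cspace d. \<exists>t. t\<noteq>0 \<and> \<rho>(d:=t) \<in> V}"
proof (subst openin_subopen, intro ballI)
  fix \<rho> assume "\<rho> \<in> {\<rho>\<in>cspace d. \<exists>t. t\<noteq>0 \<and> \<rho>(d:=t) \<in> V}"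
  then obtain t where t: "\<rho> \<in> cspace d" "t \<noteq> 0" "\<rho>(d:=t) \<in> V" by auto
  have c: "continuous_on (cspace d) (\<lambda>\<sigma>::nat\<Rightarrow>complex. \<sigma>(d:=t))"
    by (rule cont_upd) (auto intro: continuous_intros)
  have "(\<lambda>\<sigma>::nat\<Rightarrow>complex. \<sigma>(d:=t)) \<in> cspace d \<rightarrow> cspace (Suc d)" by (auto simp: cspace_def)
  from continuous_openin_preimage[OF c this V]
  have "openin (top_of_set (cspace d)) (cspace d \<inter> (\<lambda>\<sigma>. \<sigma>(d:=t)) -` V)" .
  moreover have "cspace d \<inter> (\<lambda>\<sigma>. \<sigma>(d:=t)) -` V \<subseteq> {\<rho>\<in>cspace d. \<exists>t. t\<noteq>0 \<and> \<rho>(d:=t) \<in> V}"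
    using t by auto
  ultimately show "\<exists>T. openin (top_of_set (cspace d)) T \<and> \<rho> \<in> T \<and> T \<subseteq> {\<rho>\<in>cspace d. \<exists>t. t\<noteq>0 \<and> \<rho>(d:=t) \<in> V}"
    using t by blast
qed

lemma cspace_upd0: "\<rho> \<in> cspace d \<Longrightarrow> \<rho>(d:=0) = \<rho>"
  by (auto simp: cspace_def)

lemma cspace_upd: "\<rho> \<in> cspace d \<Longrightarrow> \<rho>(d:=t) \<in> cspace (Suc d)"
  by (auto simp: cspace_def)

lemma multi:
  "openin (top_of_set (cspace d)) V \<Longrightarrow> V \<noteq> {} \<Longrightarrow>
   (\<forall>w\<in>V. (\<lambda>k. norm (c k * lmono d w k)) summable_on lexps d \<and> ((\<lambda>k. c k * lmono d w k) has_sum 0) (lexps d))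
   \<Longrightarrow> k \<in> lexps d \<Longrightarrow> c k = 0"
proof (induction d arbitrary: c V k)
  case 0
  have L: "lexps 0 = {\<lambda>_. 0}" by (auto simp: lexps_def)
  obtain w where "w \<in> V" using 0 by auto
  with 0(3) have "((\<lambda>k. c k * lmono 0 w k) has_sum 0) {\<lambda>_. 0}" by (simp add: L)
  moreover have "((\<lambda>k. c k * lmono 0 w k) has_sum c (\<lambda>_. 0)) {\<lambda>_. 0}"
    using has_sum_finite[of "{\<lambda>_. 0}" "\<lambda>k. c k * lmono 0 w k"] by (simp add: lmono_def)
  ultimately have "c (\<lambda>_. 0) = 0" using has_sum_unique by metis
  with 0(4) L show ?case by simp
next
  case (Suc d)
  define V' where "V' = {\<rho>\<in>cspace d. \<exists>t. t\<noteq>0 \<and> \<rho>(d:=t) \<in> V}"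
  have V'o: "openin (top_of_set (cspace d)) V'" unfolding V'_def by (rule proj_open[OF Suc.prems(1)])
  have Vsub: "V \<subseteq> cspace (Suc d)" using openin_subset[OF Suc.prems(1)] by simp
  have V'ne: "V' \<noteq> {}"
  proof -
    obtain w where w: "w \<in> V" using Suc.prems by auto
    have wc: "w \<in> cspace (Suc d)" using w Vsub by auto
    have "w d \<in> {t. w(d:=t) \<in> V}" using w by simp
    from open_nonzero_point[OF slice_open[OF Suc.prems(1) wc] this]
    obtain t where t: "t \<noteq> 0" "w(d:=t) \<in> V" by auto
    have "w(d:=0) \<in> V'" using t wc unfolding V'_def by (auto simp: cspace_def)
    then show ?thesis by auto
  qed
  have E0: "infsum (\<lambda>k'. c (k'(d:=l)) * lmono d \<rho> k') (lexps d) = 0"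
    and Es: "(\<lambda>k'. norm (c (k'(d:=l)) * lmono d \<rho> k')) summable_on lexps d"
    if \<rho>: "\<rho> \<in> V'" for \<rho> l
  proof -
    have \<rho>c: "\<rho> \<in> cspace d" using \<rho> by (auto simp: V'_def)
    have \<rho>c': "\<rho> \<in> cspace (Suc d)" using \<rho>c by (auto simp: cspace_def)
    define U where "U = {t. \<rho>(d:=t) \<in> V} - {0}"
    have Uo: "open U" unfolding U_def by (rule open_delete[OF slice_open[OF Suc.prems(1) \<rho>c']])
    have Une: "U \<noteq> {}" using \<rho> by (auto simp: U_def V'_def)
    have key: "(\<lambda>k'. norm (c (k'(d:=l)) * lmono d \<rho> k')) summable_on lexps d
       \<and> (\<lambda>l. norm (infsum (\<lambda>k'. c (k'(d:=l)) * lmono d \<rho> k') (lexps d) * t powi l)) summable_on UNIV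
       \<and> ((\<lambda>l. infsum (\<lambda>k'. c (k'(d:=l)) * lmono d \<rho> k') (lexps d) * t powi l) has_sum 0) UNIV"
      if t: "t \<in> U" for t l
    proof -
      have w: "\<rho>(d:=t) \<in> V" "(\<rho>(d:=t)) d \<noteq> 0" using t by (auto simp: U_def)
      have e: "(\<rho>(d:=t))(d:=0) = \<rho>" using cspace_upd0[OF \<rho>c] by simp
      from Suc.prems(3) w(1) have sm: "(\<lambda>k. norm (c k * lmono (Suc d) (\<rho>(d:=t)) k)) summable_on lexps (Suc d)"
        and hs: "((\<lambda>k. c k * lmono (Suc d) (\<rho>(d:=t)) k) has_sum 0) (lexps (Suc d))" by auto
      from split_sum[OF w(2) sm hs] show ?thesis unfolding e by simp
    qed
    have "infsum (\<lambda>k'. c (k'(d:=l)) * lmono d \<rho> k') (lexps d) = 0" for l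
      by (rule core1d[OF Uo Une, where e="\<lambda>l. infsum (\<lambda>k'. c (k'(d:=l)) * lmono d \<rho> k') (lexps d)"])
         (use key in \<open>auto simp: U_def\<close>)
    then show "infsum (\<lambda>k'. c (k'(d:=l)) * lmono d \<rho> k') (lexps d) = 0" .
    obtain t where "t \<in> U" using Une by auto
    from key[OF this] show "(\<lambda>k'. norm (c (k'(d:=l)) * lmono d \<rho> k')) summable_on lexps d" by simp
  qed
  have cl: "c (k'(d:=l)) = 0" if "k' \<in> lexps d" for k' l
  proof (rule Suc.IH[OF V'o V'ne _ that, where c="\<lambda>k'. c (k'(d:=l))"])
    show "\<forall>w\<in>V'. (\<lambda>k. norm (c (k(d := l)) * lmono d w k)) summable_on lexps d \<and>
        ((\<lambda>k. c (k(d := l)) * lmono d w k) has_sum 0) (lexps d)"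
    proof
      fix w assume w: "w \<in> V'"
      have "(\<lambda>k. c (k(d := l)) * lmono d w k) summable_on lexps d"
        by (rule abs_summable_summable[OF Es[OF w]])
      with E0[OF w, of l] show "(\<lambda>k. norm (c (k(d := l)) * lmono d w k)) summable_on lexps d \<and>
        ((\<lambda>k. c (k(d := l)) * lmono d w k) has_sum 0) (lexps d)"
        using Es[OF w] by (metis summable_iff_has_sum_infsum)
    qed
  qed
  have "k = (k(d:=0))(d := k d)" by simp
  moreover have "k(d:=0) \<in> lexps d" using lexps_del[OF Suc.prems(4)] .
  ultimately show ?case using cl by metis
qed

lemma nat_to_int_has_sum:
  fixes g :: "int \<Rightarrow> 'a::{topological_comm_monoid_add}"
  assumes h: "((\<lambda>j. g (N - int j)) has_sum s) UNIV" and z: "\<And>m. m > N \<Longrightarrow> g m = 0"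
  shows "(g has_sum s) UNIV"
proof -
  have inj: "inj_on (\<lambda>j::nat. N - int j) UNIV" by (auto simp: inj_on_def)
  have im: "(\<lambda>j::nat. N - int j) ` UNIV = {..N}"
  proof (intro equalityI subsetI)
    fix m assume "m \<in> {..N}"
    then have "m = N - int (nat (N - m))" by simp
    then show "m \<in> range (\<lambda>j. N - int j)" by blast
  qed auto
  have "(g has_sum s) ((\<lambda>j::nat. N - int j) ` UNIV)"
    using h by (subst has_sum_reindex[OF inj]) (simp add: o_def)
  then have "(g has_sum s) {..N}" by (simp add: im)
  then show ?thesis by (subst (asm) has_sum_cong_neutral[where T=UNIV]) (auto intro: z)
qed

theorem mainTheorem4:
  fixes n :: nat
    and f :: "(nat \<Rightarrow> complex) \<Rightarrow> complex"
    and T S :: "(nat \<Rightarrow> complex) set"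
    and a :: "(nat \<Rightarrow> int) \<Rightarrow> complex"
  assumes n: "n \<ge> 1"
    and T_dom: "multicircular_domain n T" and T_conn: "connected T"
    and holo: "holo_on_C n f T"
    and rat: "\<exists>P Q. is_mpoly n P \<and> is_mpoly n Q \<and> (\<exists>\<alpha>. Q \<alpha> \<noteq> 0) \<and>
               (\<forall>z\<in>T. mpoly_eval n Q z \<noteq> 0 \<longrightarrow> f z = mpoly_eval n P z / mpoly_eval n Q z) \<and>
               (\<exists>b. laurent_expansion_on n b f T \<and>
                  (\<exists>k\<in>lexps n. b k \<noteq> 0 \<and>
                      k (n - 1) = int (deg_last n P) - int (deg_last n Q)) \<and>
                  (\<forall>k\<in>lexps n. b k \<noteq> 0 \<longrightarrow>
                      k (n - 1) \<le> int (deg_last n P) - int (deg_last n Q)))"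
    and S_open: "open_in_C n S" and S_sub: "S \<subseteq> T" and S_ne: "S \<noteq> {}"
    and inner_conv: "\<forall>m::int. \<forall>w\<in>proj_last n ` S.
               laurent_abs_conv (n - 1) (\<lambda>k'. a (k'(n - 1 := m))) w"
    and trunc: "\<exists>N::int. (\<forall>m>N. \<forall>w\<in>proj_last n ` S. inner_sum n a m w = 0) \<and>
               (\<forall>z\<in>S. (\<lambda>j::nat. inner_sum n a (N - int j) (proj_last n z) * z (n - 1) powi (N - int j))
                          sums f z)"
  shows "\<forall>z\<in>T. laurent_abs_conv_to n a z (f z)"
proof -
  obtain d where nd: "n = Suc d" using n by (cases n) auto
  have d: "n - 1 = d" using nd by simp
  obtain b where bexp: "laurent_expansion_on n b f T" using rat by blast
  have bT: "(\<lambda>k. norm (b k * lmono (Suc d) z k)) summable_on lexps (Suc d)"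
       "((\<lambda>k. b k * lmono (Suc d) z k) has_sum f z) (lexps (Suc d))" if "z \<in> T" for z
    using bexp that by (auto simp: laurent_expansion_on_def laurent_abs_conv_to_def nd)
  have So: "openin (top_of_set (cspace (Suc d))) S" using S_open by (simp add: open_in_C_def nd)
  have Sc: "S \<subseteq> cspace (Suc d)" using openin_subset[OF So] by simp
  obtain N where Nz: "\<And>m w. m > N \<Longrightarrow> w \<in> (\<lambda>z. z(d:=0)) ` S \<Longrightarrow> inner_sum n a m w = 0"
    and Ns: "\<And>z. z \<in> S \<Longrightarrow> (\<lambda>j::nat. inner_sum n a (N - int j) (z(d:=0)) * z d powi (N - int j)) sums f z"
    using trunc unfolding proj_last_def d by blast
  have inner: "(\<lambda>k. norm (a (k(d:=m)) * lmono d w k)) summable_on lexps d"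
    if "w \<in> (\<lambda>z. z(d:=0)) ` S" for m w
    using inner_conv that unfolding proj_last_def d laurent_abs_conv_def by blast
  define V0 where "V0 = {\<rho>\<in>cspace d. \<exists>t. t\<noteq>0 \<and> \<rho>(d:=t) \<in> S}"
  have V0o: "openin (top_of_set (cspace d)) V0" unfolding V0_def by (rule proj_open[OF So])
  have V0S: "\<rho> \<in> (\<lambda>z. z(d:=0)) ` S" if \<rho>V: "\<rho> \<in> V0" for \<rho>
  proof -
    obtain t where "\<rho> \<in> cspace d" "\<rho>(d:=t) \<in> S" using \<rho>V by (auto simp: V0_def)
    moreover have "\<rho> = (\<rho>(d:=t))(d:=0)" using cspace_upd0[OF \<open>\<rho> \<in> cspace d\<close>] by simp
    ultimately show ?thesis by blast
  qed
  have V0ne: "V0 \<noteq> {}"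
  proof -
    obtain w where w: "w \<in> S" using S_ne by auto
    have wc: "w \<in> cspace (Suc d)" using w Sc by auto
    have "w d \<in> {t. w(d:=t) \<in> S}" using w by simp
    from open_nonzero_point[OF slice_open[OF So wc] this]
    obtain t where t: "t \<noteq> 0" "w(d:=t) \<in> S" by auto
    have "w(d:=0) \<in> V0" using t wc unfolding V0_def by (auto simp: cspace_def)
    then show ?thesis by auto
  qed
  define G where "G = (\<lambda>m \<rho>. infsum (\<lambda>k'. a (k'(d:=m)) * lmono d \<rho> k') (lexps d))"
  define H where "H = (\<lambda>m \<rho>. infsum (\<lambda>k'. b (k'(d:=m)) * lmono d \<rho> k') (lexps d))"
  have GI: "inner_sum n a m \<rho> = G m \<rho>" for m \<rho> by (simp add: inner_sum_def G_def nd)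
  have bsplit: "(\<lambda>k'. norm (b (k'(d:=l)) * lmono d \<rho> k')) summable_on lexps d
       \<and> (\<lambda>l. norm (H l \<rho> * t powi l)) summable_on UNIV
       \<and> ((\<lambda>l. H l \<rho> * t powi l) has_sum f (\<rho>(d:=t))) UNIV"
    if "\<rho> \<in> cspace d" "t \<noteq> 0" "\<rho>(d:=t) \<in> S" for \<rho> t l
  proof -
    have zT: "\<rho>(d:=t) \<in> T" using that S_sub by auto
    have e: "(\<rho>(d:=t))(d:=0) = \<rho>" using cspace_upd0[OF that(1)] by simp
    have nz: "(\<rho>(d:=t)) d \<noteq> 0" using that by simp
    from split_sum[OF nz bT[OF zT]] show ?thesis unfolding e H_def by simp
  qed
  have GH: "G m \<rho> = H m \<rho>" if \<rho>: "\<rho> \<in> V0" for m \<rho>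
  proof -
    have \<rho>c: "\<rho> \<in> cspace d" using \<rho> by (auto simp: V0_def)
    have \<rho>c': "\<rho> \<in> cspace (Suc d)" using \<rho>c by (auto simp: cspace_def)
    have \<rho>S: "\<rho> \<in> (\<lambda>z. z(d:=0)) ` S" by (rule V0S[OF \<rho>])
    obtain t0 where t0: "t0 \<noteq> 0" "\<rho>(d:=t0) \<in> S" using \<rho> by (auto simp: V0_def)
    have e0: "(\<rho>(d:=t))(d:=0) = \<rho>" for t using cspace_upd0[OF \<rho>c] by simp
    define U where "U = {t. \<rho>(d:=t) \<in> S} \<inter> {t. norm t0 < norm t}"
    have Uo: "open U" unfolding U_def
      by (intro open_Int slice_open[OF So \<rho>c']) (auto intro!: open_Collect_less continuous_intros)
    have Une: "U \<noteq> {}"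
    proof -
      obtain r where r: "r > 0" "ball t0 r \<subseteq> {t. \<rho>(d:=t) \<in> S}"
        using slice_open[OF So \<rho>c'] t0 open_contains_ball by blast
      define t1 where "t1 = of_real (1 + r / (2 * norm t0)) * t0"
      have n1: "norm t1 = norm t0 + r/2"
      proof -
        have "norm t1 = \<bar>1 + r / (2 * norm t0)\<bar> * norm t0" unfolding t1_def norm_mult norm_of_real by (rule refl)
        also have "\<dots> = norm t0 + r/2" using r t0 by (simp add: field_simps)
        finally show ?thesis .
      qed
      have "dist t0 t1 = norm (of_real (r / (2 * norm t0)) * t0)"
        unfolding dist_norm t1_def by (simp add: algebra_simps)
      also have "\<dots> = \<bar>r / (2 * norm t0)\<bar> * norm t0" unfolding norm_mult norm_of_real by (rule refl)
      also have "\<dots> = r/2" using r t0 by simp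
      finally have "t1 \<in> ball t0 r" using r by simp
      then have "t1 \<in> U" using r n1 unfolding U_def by auto
      then show ?thesis by auto
    qed
    have U0: "0 \<notin> U" by (auto simp: U_def)
    have Ut: "t \<noteq> 0" "\<rho>(d:=t) \<in> S" "norm t0 < norm t" if "t \<in> U" for t
      using that by (auto simp: U_def)
    have "(\<lambda>j::nat. G (N - int j) \<rho> * t0 powi (N - int j)) sums f (\<rho>(d:=t0))"
      using Ns[OF t0(2)] by (simp add: GI cspace_upd0[OF \<rho>c])
    then have "(\<lambda>j::nat. G (N - int j) \<rho> * t0 powi (N - int j)) \<longlonglongrightarrow> 0"
      by (simp add: summable_LIMSEQ_zero sums_summable)
    then have "Bseq (\<lambda>j::nat. G (N - int j) \<rho> * t0 powi (N - int j))"
      by (rule convergent_imp_Bseq[OF convergentI])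
    then obtain B where B: "B > 0" "\<And>j. norm (G (N - int j) \<rho> * t0 powi (N - int j)) \<le> B"
      by (auto simp: Bseq_def)
    have gsum: "(\<lambda>m. norm (G m \<rho> * t powi m)) summable_on UNIV"
      "((\<lambda>m. G m \<rho> * t powi m) has_sum f (\<rho>(d:=t))) UNIV" if t: "t \<in> U" for t
    proof -
      define r where "r = norm t / norm t0"
      have r: "r > 1" using Ut[OF t] t0 by (simp add: r_def)
      have bnd: "norm (G (N - int j) \<rho> * t powi (N - int j)) \<le> B * r powi N * (inverse r) ^ j" for j
      proof -
        have "norm (G (N - int j) \<rho> * t powi (N - int j))
            = norm (G (N - int j) \<rho> * t0 powi (N - int j)) * r powi (N - int j)"
          using t0 by (simp add: r_def norm_mult norm_power_int power_int_divide_distrib)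
        also have "\<dots> \<le> B * r powi (N - int j)"
          using B(2)[of j] r by (intro mult_right_mono) auto
        also have "r powi (N - int j) = r powi N * (inverse r) ^ j"
          using r by (simp add: power_int_diff power_inverse divide_inverse)
        finally show ?thesis by (simp add: mult.assoc)
      qed
      have sn: "summable (\<lambda>j. norm (G (N - int j) \<rho> * t powi (N - int j)))"
      proof (rule summable_comparison_test'[where N=0])
        show "summable (\<lambda>j. B * r powi N * inverse r ^ j)"
          using r by (intro summable_mult summable_geometric) (simp add: inverse_less_1_iff)
      qed (use bnd in auto)
      have "(\<lambda>j::nat. G (N - int j) \<rho> * t powi (N - int j)) sums f (\<rho>(d:=t))"
        using Ns[OF Ut(2)[OF t]] by (simp add: GI cspace_upd0[OF \<rho>c])
      from norm_summable_imp_has_sum[OF sn this]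
      show "((\<lambda>m. G m \<rho> * t powi m) has_sum f (\<rho>(d:=t))) UNIV"
        by (rule nat_to_int_has_sum[where g="\<lambda>m. G m \<rho> * t powi m"]) (use Nz \<rho>S GI in auto)
      have "((\<lambda>j. norm (G (N - int j) \<rho> * t powi (N - int j))) has_sum suminf (\<lambda>j. norm (G (N - int j) \<rho> * t powi (N - int j)))) UNIV"
        using sn by (intro norm_summable_imp_has_sum) (auto intro: summable_sums)
      then have "((\<lambda>m. norm (G m \<rho> * t powi m)) has_sum suminf (\<lambda>j. norm (G (N - int j) \<rho> * t powi (N - int j)))) UNIV"
        by (rule nat_to_int_has_sum[where g="\<lambda>m. norm (G m \<rho> * t powi m)"]) (use Nz \<rho>S GI in auto)
      then show "(\<lambda>m. norm (G m \<rho> * t powi m)) summable_on UNIV" by (rule has_sum_imp_summable)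
    qed
    have "G m \<rho> - H m \<rho> = 0"
    proof (rule core1d[OF Uo Une U0, where e="\<lambda>m. G m \<rho> - H m \<rho>"])
      fix t assume t: "t \<in> U"
      have hb: "(\<lambda>l. norm (H l \<rho> * t powi l)) summable_on UNIV"
        "((\<lambda>l. H l \<rho> * t powi l) has_sum f (\<rho>(d:=t))) UNIV"
        using bsplit[OF \<rho>c Ut(1,2)[OF t]] by auto
      show "((\<lambda>k. (G k \<rho> - H k \<rho>) * t powi k) has_sum 0) UNIV"
        using has_sum_diff'[OF gsum(2)[OF t] hb(2)] by (simp add: algebra_simps)
      show "(\<lambda>k. norm ((G k \<rho> - H k \<rho>) * t powi k)) summable_on UNIV"
      proof (rule summable_on_comparison_test[OF summable_on_add[OF gsum(1)[OF t] hb(1)]])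
        fix k :: int
        show "norm ((G k \<rho> - H k \<rho>) * t powi k) \<le> norm (G k \<rho> * t powi k) + norm (H k \<rho> * t powi k)"
          by (metis left_diff_distrib norm_triangle_ineq4)
      qed simp
    qed
    then show ?thesis by simp
  qed
  have ab: "a (k'(d:=m)) = b (k'(d:=m))" if k': "k' \<in> lexps d" for k' m
  proof -
    have "a (k'(d:=m)) - b (k'(d:=m)) = 0"
    proof (rule multi[OF V0o V0ne _ k', where c="\<lambda>k'. a (k'(d:=m)) - b (k'(d:=m))"])
      show "\<forall>w\<in>V0. (\<lambda>k. norm ((a (k(d:=m)) - b (k(d:=m))) * lmono d w k)) summable_on lexps d \<and>
            ((\<lambda>k. (a (k(d:=m)) - b (k(d:=m))) * lmono d w k) has_sum 0) (lexps d)"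
      proof
        fix w assume w: "w \<in> V0"
        obtain t where t: "w \<in> cspace d" "t \<noteq> 0" "w(d:=t) \<in> S" using w by (auto simp: V0_def)
        have sa: "(\<lambda>k. norm (a (k(d:=m)) * lmono d w k)) summable_on lexps d" by (rule inner[OF V0S[OF w]])
        have sb: "(\<lambda>k. norm (b (k(d:=m)) * lmono d w k)) summable_on lexps d"
          using bsplit[OF t] by blast
        have ha: "((\<lambda>k. a (k(d:=m)) * lmono d w k) has_sum G m w) (lexps d)"
          using abs_summable_summable[OF sa] unfolding G_def by (simp add: summable_iff_has_sum_infsum)
        have hb: "((\<lambda>k. b (k(d:=m)) * lmono d w k) has_sum H m w) (lexps d)"
          using abs_summable_summable[OF sb] unfolding H_def by (simp add: summable_iff_has_sum_infsum)
        have "((\<lambda>k. (a (k(d:=m)) - b (k(d:=m))) * lmono d w k) has_sum (G m w - H m w)) (lexps d)"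
          using has_sum_diff'[OF ha hb] by (simp add: algebra_simps)
        moreover have "(\<lambda>k. norm ((a (k(d:=m)) - b (k(d:=m))) * lmono d w k)) summable_on lexps d"
        proof (rule summable_on_comparison_test[OF summable_on_add[OF sa sb]])
          fix k
          show "norm ((a (k(d:=m)) - b (k(d:=m))) * lmono d w k) \<le> norm (a (k(d:=m)) * lmono d w k) + norm (b (k(d:=m)) * lmono d w k)"
            by (metis left_diff_distrib norm_triangle_ineq4)
        qed simp
        ultimately show "(\<lambda>k. norm ((a (k(d:=m)) - b (k(d:=m))) * lmono d w k)) summable_on lexps d \<and>
            ((\<lambda>k. (a (k(d:=m)) - b (k(d:=m))) * lmono d w k) has_sum 0) (lexps d)"
          using GH[OF w, of m] by simp
      qed
    qed
    then show ?thesis by simp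
  qed
  have abk: "a k = b k" if "k \<in> lexps n" for k
  proof -
    have "k = (k(d:=0))(d := k d)" by simp
    moreover have "k(d:=0) \<in> lexps d" using lexps_del that nd by simp
    ultimately show ?thesis using ab by metis
  qed
  show ?thesis
  proof
    fix z assume z: "z \<in> T"
    have "laurent_abs_conv_to n b z (f z)" using bexp z by (simp add: laurent_expansion_on_def)
    then show "laurent_abs_conv_to n a z (f z)"
      unfolding laurent_abs_conv_to_def
      by (subst summable_on_cong[where g="\<lambda>k. norm (b k * lmono n z k)"], simp add: abk)
         (subst has_sum_cong[where g="\<lambda>k. b k * lmono n z k"], simp_all add: abk)
  qed
qed

end
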